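(* Let $M$ be a score distribution model in which a route can only distribute non-negative scores, i.e. $w_M(j,k)\ge 0$ for all $j,k$. Then for every road segment $s$ we have $s.\mathit{lb} \le s.\mathit{min}$ and $s.\mathit{ub} \ge s.\mathit{max}$, where $s.\mathit{min}=\min_{p\in s}\mathit{score}_M(p)$ and $s.\mathit{max}=\max_{p\in s}\mathit{score}_M(p)$.
   Context: A road network is a directed graph $G=(V,E)$ embedded in the plane: each vertex $v$ has a location $\mathit{loc}(v)\in\mathbb{R}^2$, and each edge $e=(v_i,v_j)$ has length $\|e\|$ equal to the Euclidean distance between $\mathit{loc}(v_i)$ and $\mathit{loc}(v_j)$. A network point is a pair $p=(\mathit{eid},d)$ where $\mathit{eid}$ identifies an edge $e=(v_i,v_j)$ and $d\in[0,1]$ is the ratio of the distance from $v_i$ to the point to $\|e\|$; $P$ denotes the set of all network points (so $V\subseteq P$). A road segment is a sequence $s=\langle p_1,\dots,p_n\rangle$, $n\ge 2$, with $p_1,p_n\in P$, $p_2,\dots,p_{n-1}\in V$, $p_1,p_2$ on the same edge, $p_{n-1},p_n$ on the same edge, and $(p_i,p_{i+1})\in E$ for $1<i<n-1$; a segment is identified with the set of network points it passes through. A facility $f$ is located at a network point $f.p$; $F$ is the set of facilities. A route usage object is $\mathit{ro}=(\mathit{rid},r,\mathit{count},\langle \mathit{usage}_1,\dots,\mathit{usage}_{\mathit{count}}\rangle)$ whose route $r$ is a road segment; $R$ is the set of route usage objects. A route $r$ covers a segment $s'$ if every point of $s'$ lies on $r$, and intersects $s'$ if some point of $s'$ lies on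 $r$. $s'.C$ (resp. $s'.I$) is the set of route usage objects whose routes cover (resp. intersect) $s'$; $s'.C\subseteq s'.I$. For a fixed threshold $\delta>0$, a facility $f$ attracts a route $r$ if the shortest network distance from $f.p$ to $r$ is at most $\delta$. Each route $r$ is assigned a score $\mathit{score}(r)\ge 0$ (e.g. $\mathit{score}(r)=\mathrm{length}(r)\sum_i \mathit{usage}_i$). A score distribution model $M$ distributes $\mathit{score}(r)$ over the subsegments of $r$: the facilities attracting $r$ partition $r$ into $k$ consecutive subsegments, and the $j$-th subsegment ($1\le j\le k$) receives $w_M(j,k)\cdot\mathit{score}(r)$. The score $\mathit{score}_M(p)$ of a network point $p$ is the sum, over all route usage objects whose route contains $p$, of the amount assigned by $M$ to the subsegment of that route containing $p$. For a segment $s$ and a route $r_i$ intersecting $s$, let $w_M(j_i,k_i)$ be the fraction of $\mathit{score}(r_i)$ assigned by $M$ to the $j_i$-th subsegment of $r_i$ (out of $k_i$) in which $s$ lies. The lower and upper bound scores of $s$ are $s.\mathit{lb}=\sum_{r_i\in s.C} w_M(j_i,k_i)\,\mathit{score}(r_i)$ and $s.\mathit{ub}=\sum_{r_i\in s.I} w_M(j_i,k_i)\,\mathit{score}(r_i)$; when facilities lie on $s$ so that $s$ meets several subsegments of a route, the lower bound uses the smallest and the upper bound the largest of the corresponding assigned values. *)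

theory Defs
  imports Complex_Main
begin

text \<open>
  Network points have an arbitrary type 'p; a road segment is
  identified with the set of network points it passes through. Route usage objects
  have an arbitrary type 'r; for a route usage object ro:
    route ro     : the set of network points of its route (a road segment),
    score ro     : score(r),
    nsub ro      : the number k of subsegments into which the facilities attracting
                   the route partition it,
    sub ro p     : the index j (1 <= j <= k) of the subsegment of the route containing p.
  A score distribution model M is given by its weight function w, w j k = w_M(j,k).
\<close>

definition covers :: "('r \<Rightarrow> 'p set) \<Rightarrow> 'r \<Rightarrow> 'p set \<Rightarrow> bool" where
  "covers route ro s \<longleftrightarrow> s \<subseteq> route ro"

definition intersects :: "('r \<Rightarrow> 'p set) \<Rightarrow> 'r \<Rightarrow> 'p set \<Rightarrow> bool" where
  "intersects route ro s \<longleftrightarrow> s \<inter> route ro \<noteq> {}"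

definition segC :: "'r set \<Rightarrow> ('r \<Rightarrow> 'p set) \<Rightarrow> 'p set \<Rightarrow> 'r set" where
  "segC R route s = {ro \<in> R. covers route ro s}"

definition segI :: "'r set \<Rightarrow> ('r \<Rightarrow> 'p set) \<Rightarrow> 'p set \<Rightarrow> 'r set" where
  "segI R route s = {ro \<in> R. intersects route ro s}"

definition assigned :: "(nat \<Rightarrow> nat \<Rightarrow> real) \<Rightarrow> ('r \<Rightarrow> real) \<Rightarrow> ('r \<Rightarrow> nat)
    \<Rightarrow> ('r \<Rightarrow> 'p \<Rightarrow> nat) \<Rightarrow> 'r \<Rightarrow> 'p \<Rightarrow> real" where
  "assigned w score nsub sub ro p = w (sub ro p) (nsub ro) * score ro"

definition score_M :: "(nat \<Rightarrow> nat \<Rightarrow> real) \<Rightarrow> 'r set \<Rightarrow> ('r \<Rightarrow> 'p set) \<Rightarrow> ('r \<Rightarrow> real)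
    \<Rightarrow> ('r \<Rightarrow> nat) \<Rightarrow> ('r \<Rightarrow> 'p \<Rightarrow> nat) \<Rightarrow> 'p \<Rightarrow> real" where
  "score_M w R route score nsub sub p =
     (\<Sum>ro \<in> {ro \<in> R. p \<in> route ro}. assigned w score nsub sub ro p)"

definition seg_lb :: "(nat \<Rightarrow> nat \<Rightarrow> real) \<Rightarrow> 'r set \<Rightarrow> ('r \<Rightarrow> 'p set) \<Rightarrow> ('r \<Rightarrow> real)
    \<Rightarrow> ('r \<Rightarrow> nat) \<Rightarrow> ('r \<Rightarrow> 'p \<Rightarrow> nat) \<Rightarrow> 'p set \<Rightarrow> real" where
  "seg_lb w R route score nsub sub s =
     (\<Sum>ro \<in> segC R route s. Min (assigned w score nsub sub ro ` (s \<inter> route ro)))"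

definition seg_ub :: "(nat \<Rightarrow> nat \<Rightarrow> real) \<Rightarrow> 'r set \<Rightarrow> ('r \<Rightarrow> 'p set) \<Rightarrow> ('r \<Rightarrow> real)
    \<Rightarrow> ('r \<Rightarrow> nat) \<Rightarrow> ('r \<Rightarrow> 'p \<Rightarrow> nat) \<Rightarrow> 'p set \<Rightarrow> real" where
  "seg_ub w R route score nsub sub s =
     (\<Sum>ro \<in> segI R route s. Max (assigned w score nsub sub ro ` (s \<inter> route ro)))"

definition seg_min :: "(nat \<Rightarrow> nat \<Rightarrow> real) \<Rightarrow> 'r set \<Rightarrow> ('r \<Rightarrow> 'p set) \<Rightarrow> ('r \<Rightarrow> real)
    \<Rightarrow> ('r \<Rightarrow> nat) \<Rightarrow> ('r \<Rightarrow> 'p \<Rightarrow> nat) \<Rightarrow> 'p set \<Rightarrow> real" where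
  "seg_min w R route score nsub sub s = Min (score_M w R route score nsub sub ` s)"

definition seg_max :: "(nat \<Rightarrow> nat \<Rightarrow> real) \<Rightarrow> 'r set \<Rightarrow> ('r \<Rightarrow> 'p set) \<Rightarrow> ('r \<Rightarrow> real)
    \<Rightarrow> ('r \<Rightarrow> nat) \<Rightarrow> ('r \<Rightarrow> 'p \<Rightarrow> nat) \<Rightarrow> 'p set \<Rightarrow> real" where
  "seg_max w R route score nsub sub s = Max (score_M w R route score nsub sub ` s)"

end

theory Submission
  imports Defs "HOL-Library.FuncSet"
begin

theorem lemma2:
  fixes w :: "nat \<Rightarrow> nat \<Rightarrow> real"
    and R :: "'r set" and route :: "'r \<Rightarrow> 'p set"
    and score :: "'r \<Rightarrow> real" and nsub :: "'r \<Rightarrow> nat" and sub :: "'r \<Rightarrow> 'p \<Rightarrow> nat"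
    and s :: "'p set"
  assumes finR: "finite R"
    and w_nonneg: "\<And>j k. w j k \<ge> 0"
    and score_nonneg: "\<And>ro. ro \<in> R \<Longrightarrow> score ro \<ge> 0"
    and sub_range: "\<And>ro p. ro \<in> R \<Longrightarrow> p \<in> route ro \<Longrightarrow> sub ro p \<in> {1..nsub ro}"
    and s_nonempty: "s \<noteq> {}"
  shows "seg_lb w R route score nsub sub s \<le> seg_min w R route score nsub sub s
       \<and> seg_ub w R route score nsub sub s \<ge> seg_max w R route score nsub sub s"
proof -
  let ?a = "assigned w score nsub sub"
  let ?S = "score_M w R route score nsub sub"
  have anon: "?a ro p \<ge> 0" if "ro \<in> R" for ro p
    using w_nonneg score_nonneg[OF that] by (simp add: assigned_def)
  have finA: "finite (?a ro ` (s \<inter> route ro))" if "ro \<in> R" for ro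
  proof (rule finite_subset)
    show "?a ro ` (s \<inter> route ro) \<subseteq> (\<lambda>j. w j (nsub ro) * score ro) ` {1..nsub ro}"
      using sub_range[OF that] by (auto simp: assigned_def)
  qed auto
  define G where "G p = (\<lambda>ro\<in>R. if p \<in> route ro then sub ro p else 0)" for p
  define F where "F g = (\<Sum>ro \<in> {ro \<in> R. g ro \<noteq> 0}. w (g ro) (nsub ro) * score ro)" for g
  have SF: "?S p = F (G p)" for p
  proof -
    have "{ro \<in> R. G p ro \<noteq> 0} = {ro \<in> R. p \<in> route ro}"
      using sub_range by (force simp: G_def)
    then show ?thesis unfolding F_def score_M_def assigned_def
      by (auto intro!: sum.cong simp: G_def)
  qed
  have finS: "finite (?S ` s)"
  proof (rule finite_subset)
    show "?S ` s \<subseteq> F ` (PiE R (\<lambda>ro. {0..nsub ro}))"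
    proof
      fix x assume "x \<in> ?S ` s"
      then obtain p where "x = F (G p)" using SF by auto
      moreover have "G p \<in> PiE R (\<lambda>ro. {0..nsub ro})"
        using sub_range by (auto simp: G_def PiE_def extensional_def)
      ultimately show "x \<in> F ` (PiE R (\<lambda>ro. {0..nsub ro}))" by blast
    qed
    show "finite (F ` (PiE R (\<lambda>ro. {0..nsub ro})))"
      by (intro finite_imageI finite_PiE finR) auto
  qed
  have lb: "seg_lb w R route score nsub sub s \<le> ?S p" if "p \<in> s" for p
  proof -
    have "seg_lb w R route score nsub sub s = (\<Sum>ro \<in> segC R route s. Min (?a ro ` (s \<inter> route ro)))"
      by (simp add: seg_lb_def)
    also have "\<dots> \<le> (\<Sum>ro \<in> segC R route s. ?a ro p)"
    proof (rule sum_mono)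
      fix ro assume ro: "ro \<in> segC R route s"
      then have "ro \<in> R" "p \<in> route ro" using that by (auto simp: segC_def covers_def)
      then show "Min (?a ro ` (s \<inter> route ro)) \<le> ?a ro p"
        using finA that by (intro Min_le) auto
    qed
    also have "\<dots> \<le> (\<Sum>ro \<in> {ro \<in> R. p \<in> route ro}. ?a ro p)"
      using that finR anon by (intro sum_mono2) (auto simp: segC_def covers_def)
    finally show ?thesis by (simp add: score_M_def)
  qed
  have ub: "?S p \<le> seg_ub w R route score nsub sub s" if "p \<in> s" for p
  proof -
    have "?S p = (\<Sum>ro \<in> {ro \<in> R. p \<in> route ro}. ?a ro p)" by (simp add: score_M_def)
    also have "\<dots> \<le> (\<Sum>ro \<in> {ro \<in> R. p \<in> route ro}. Max (?a ro ` (s \<inter> route ro)))"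
      using finA that by (intro sum_mono Max_ge) auto
    also have "\<dots> \<le> (\<Sum>ro \<in> segI R route s. Max (?a ro ` (s \<inter> route ro)))"
    proof (rule sum_mono2)
      show "finite (segI R route s)" using finR by (simp add: segI_def)
      show "{ro \<in> R. p \<in> route ro} \<subseteq> segI R route s"
        using that by (auto simp: segI_def intersects_def)
      fix ro assume "ro \<in> segI R route s - {ro \<in> R. p \<in> route ro}"
      then obtain q where "ro \<in> R" "q \<in> s \<inter> route ro" by (auto simp: segI_def intersects_def)
      then have "?a ro q \<le> Max (?a ro ` (s \<inter> route ro))" using finA by (intro Max_ge) auto
      then show "0 \<le> Max (?a ro ` (s \<inter> route ro))" using anon[OF \<open>ro \<in> R\<close>, of q] by linarith
    qed
    finally show ?thesis by (simp add: seg_ub_def)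
  qed
  show ?thesis
    unfolding seg_min_def seg_max_def
    using finS s_nonempty lb ub by (auto simp: Min_ge_iff Max_le_iff)
qed

end
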